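(* For every positive integer $h$ there exists $N$ such that if $G$ is a graph with $|V(G)|\ge N$ which is neither complete nor edgeless, then $G$ contains an induced subgraph $J$ such that $|V(J)|=h$ and either $J$ or $\bar J$ is a star or has exactly one edge.
   Context: All graphs are finite and simple; $\bar J$ denotes the complement of $J$; a star is a complete bipartite graph $K_{1,m}$. *)

theory Defs
  imports Main
begin

definition simple_graph :: "'a set \<Rightarrow> ('a \<Rightarrow> 'a \<Rightarrow> bool) \<Rightarrow> bool" where
  "simple_graph V E \<longleftrightarrow> finite V \<and>
     (\<forall>x\<in>V. \<forall>y\<in>V. E x y \<longrightarrow> E y x) \<and> (\<forall>x\<in>V. \<not> E x x)"

definition complete_graph :: "'a set \<Rightarrow> ('a \<Rightarrow> 'a \<Rightarrow> bool) \<Rightarrow> bool" where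
  "complete_graph V E \<longleftrightarrow> (\<forall>x\<in>V. \<forall>y\<in>V. x \<noteq> y \<longrightarrow> E x y)"

definition edgeless_graph :: "'a set \<Rightarrow> ('a \<Rightarrow> 'a \<Rightarrow> bool) \<Rightarrow> bool" where
  "edgeless_graph V E \<longleftrightarrow> (\<forall>x\<in>V. \<forall>y\<in>V. \<not> E x y)"

definition compl_rel :: "('a \<Rightarrow> 'a \<Rightarrow> bool) \<Rightarrow> 'a \<Rightarrow> 'a \<Rightarrow> bool" where
  "compl_rel E x y \<longleftrightarrow> x \<noteq> y \<and> \<not> E x y"

definition is_star :: "'a set \<Rightarrow> ('a \<Rightarrow> 'a \<Rightarrow> bool) \<Rightarrow> bool" where
  "is_star S E \<longleftrightarrow> (\<exists>c\<in>S. \<forall>x\<in>S. \<forall>y\<in>S. x \<noteq> y \<longrightarrow> (E x y \<longleftrightarrow> x = c \<or> y = c))"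

definition edges_on :: "'a set \<Rightarrow> ('a \<Rightarrow> 'a \<Rightarrow> bool) \<Rightarrow> 'a set set" where
  "edges_on S E = {{x, y} | x y. x \<in> S \<and> y \<in> S \<and> x \<noteq> y \<and> E x y}"

definition has_exactly_one_edge :: "'a set \<Rightarrow> ('a \<Rightarrow> 'a \<Rightarrow> bool) \<Rightarrow> bool" where
  "has_exactly_one_edge S E \<longleftrightarrow> card (edges_on S E) = 1"

end

theory Submission
  imports Defs "HOL-Library.Ramsey"
begin

lemma one_edge_aux:
  assumes fin: "finite V" and sym: "\<forall>x\<in>V. \<forall>y\<in>V. E x y \<longrightarrow> E y x"
    and I: "I \<subseteq> V" and ind: "\<forall>a\<in>I. \<forall>b\<in>I. a \<noteq> b \<longrightarrow> \<not> E a b"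
    and v: "v \<in> V" "v \<notin> I" and u: "u \<in> V" "u \<noteq> v" "E v u"
    and T: "T \<subseteq> I" "u \<notin> T" "card T = h - 2" and h: "h \<ge> 2"
    and nT: "\<forall>t\<in>T. \<not> E v t \<and> \<not> E u t"
  shows "{v,u} \<union> T \<subseteq> V \<and> card ({v,u} \<union> T) = h \<and> has_exactly_one_edge ({v,u} \<union> T) E"
proof -
  have fT: "finite T" using T I fin finite_subset by blast
  have vT: "v \<notin> T" using T v by blast
  have c: "card ({v,u} \<union> T) = h"
    using fT vT T u h by (simp add: card_insert_if)
  have "edges_on ({v,u} \<union> T) E = {{v,u}}"
  proof
    show "{{v,u}} \<subseteq> edges_on ({v,u} \<union> T) E"
      unfolding edges_on_def using u by blast
  next
    show "edges_on ({v,u} \<union> T) E \<subseteq> {{v,u}}"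
    proof
      fix e assume "e \<in> edges_on ({v,u} \<union> T) E"
      then obtain a b where e: "e = {a,b}" "a \<in> {v,u} \<union> T" "b \<in> {v,u} \<union> T" "a \<noteq> b" "E a b"
        unfolding edges_on_def by blast
      have TV: "T \<subseteq> V" using T I by blast
      have "(a = v \<and> b = u) \<or> (a = u \<and> b = v)"
      proof -
        have "\<not> (a \<in> T \<and> b \<in> T)" using e ind T by blast
        moreover have "\<not> (a \<in> T \<and> b = v)" using e nT sym TV v by blast
        moreover have "\<not> (a \<in> T \<and> b = u)" using e nT sym TV u by blast
        moreover have "\<not> (a = v \<and> b \<in> T)" using e nT by blast
        moreover have "\<not> (a = u \<and> b \<in> T)" using e nT by blast
        ultimately show ?thesis using e by blast
      qed
      then show "e \<in> {{v,u}}" using e by auto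
    qed
  qed
  then show ?thesis using c T I v u unfolding has_exactly_one_edge_def by auto
qed

lemma nbr_aux:
  assumes fin: "finite V" and sym: "\<forall>x\<in>V. \<forall>y\<in>V. E x y \<longrightarrow> E y x"
    and I: "I \<subseteq> V" and ind: "\<forall>a\<in>I. \<forall>b\<in>I. a \<noteq> b \<longrightarrow> \<not> E a b"
    and cI: "card I \<ge> 2*h" and h: "h \<ge> 2"
    and v: "v \<in> V" "v \<notin> I" and w: "w \<in> I" "E v w"
  shows "\<exists>S\<subseteq>V. card S = h \<and> (is_star S E \<or> has_exactly_one_edge S E)"
proof -
  have fI: "finite I" using I fin finite_subset by blast
  define Nb where "Nb = {x\<in>I. E v x}"
  show ?thesis
  proof (cases "card Nb \<ge> h - 1")
    case True
    then obtain T where T: "T \<subseteq> Nb" "card T = h - 1" "finite T"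
      by (meson obtain_subset_with_card_n)
    have vT: "v \<notin> T" using T v Nb_def by blast
    have "card (insert v T) = h" using T vT h by simp
    moreover have "is_star (insert v T) E"
      unfolding is_star_def
    proof (intro bexI[of _ v] ballI impI)
      fix x y assume xy: "x \<in> insert v T" "y \<in> insert v T" "x \<noteq> y"
      have TV: "T \<subseteq> V" "T \<subseteq> I" using T Nb_def I by auto
      show "E x y \<longleftrightarrow> x = v \<or> y = v"
      proof (cases "x = v")
        case True then show ?thesis using xy T Nb_def by auto
      next
        case False
        show ?thesis
        proof (cases "y = v")
          case True
          then have "E v x" using xy False T Nb_def by auto
          then show ?thesis using True sym TV v xy False by blast
        next
          case F2: False
          then show ?thesis using False xy ind TV by blast
        qed
      qed
    qed simp
    moreover have "insert v T \<subseteq> V" using T Nb_def I v by blast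
    ultimately show ?thesis by blast
  next
    case False
    have "Nb \<subseteq> I" using Nb_def by blast
    then have "card (I - Nb) = card I - card Nb" using fI by (simp add: card_Diff_subset finite_subset)
    then have "card (I - Nb) \<ge> h - 2" using False cI by linarith
    then obtain T where T: "T \<subseteq> I - Nb" "card T = h - 2" "finite T"
      by (meson obtain_subset_with_card_n)
    have wV: "w \<in> V" using w I by blast
    have nT: "\<forall>t\<in>T. \<not> E v t \<and> \<not> E w t"
    proof
      fix t assume t: "t \<in> T"
      then have "t \<in> I" "t \<notin> Nb" using T by auto
      moreover have "w \<in> Nb" using w Nb_def by simp
      ultimately show "\<not> E v t \<and> \<not> E w t" using ind w Nb_def by auto
    qed
    have "w \<noteq> v" using w v by blast
    moreover have "w \<notin> T" using T w Nb_def by blast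
    ultimately have "{v,w} \<union> T \<subseteq> V \<and> card ({v,w} \<union> T) = h \<and> has_exactly_one_edge ({v,w} \<union> T) E"
      using one_edge_aux[OF fin sym I ind v wV _ w(2) _ _ _ h nT] T by blast
    then show ?thesis by blast
  qed
qed

lemma core:
  assumes fin: "finite V" and sym: "\<forall>x\<in>V. \<forall>y\<in>V. E x y \<longrightarrow> E y x"
    and I: "I \<subseteq> V" and ind: "\<forall>a\<in>I. \<forall>b\<in>I. a \<noteq> b \<longrightarrow> \<not> E a b"
    and cI: "card I \<ge> 2*h" and h: "h \<ge> 2"
    and ed: "\<exists>x\<in>V. \<exists>y\<in>V. x \<noteq> y \<and> E x y"
  shows "\<exists>S\<subseteq>V. card S = h \<and> (is_star S E \<or> has_exactly_one_edge S E)"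
proof -
  obtain x y where xy: "x \<in> V" "y \<in> V" "x \<noteq> y" "E x y" using ed by blast
  have "\<exists>x y. x \<in> V \<and> y \<in> V \<and> x \<noteq> y \<and> E x y \<and> x \<notin> I"
  proof (cases "x \<in> I")
    case True
    then have "y \<notin> I" using ind xy by blast
    then show ?thesis using xy sym by blast
  next
    case False
    then show ?thesis using xy by blast
  qed
  then obtain v u where vu: "v \<in> V" "u \<in> V" "v \<noteq> u" "E v u" "v \<notin> I" by blast
  show ?thesis
  proof (cases "\<exists>w\<in>I. E v w")
    case True
    then show ?thesis using nbr_aux[OF fin sym I ind cI h vu(1) vu(5)] by blast
  next
    case nv: False
    then have uI: "u \<notin> I" using vu by blast
    show ?thesis
    proof (cases "\<exists>w\<in>I. E u w")
      case True
      then show ?thesis using nbr_aux[OF fin sym I ind cI h vu(2) uI] by blast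
    next
      case False
      have fI: "finite I" using I fin finite_subset by blast
      have "card I \<ge> h - 2" using cI by linarith
      then obtain T where T: "T \<subseteq> I" "card T = h - 2" "finite T"
        by (meson obtain_subset_with_card_n)
      have nT: "\<forall>t\<in>T. \<not> E v t \<and> \<not> E u t" using T nv False by blast
      have "u \<notin> T" using uI T by blast
      then have "{v,u} \<union> T \<subseteq> V \<and> card ({v,u} \<union> T) = h \<and> has_exactly_one_edge ({v,u} \<union> T) E"
        using one_edge_aux[OF fin sym I ind vu(1) vu(5) vu(2) _ vu(4) T(1) _ T(2) h nT] vu(3) by blast
      then show ?thesis by blast
    qed
  qed
qed

theorem lemma3p8:
  fixes h :: nat
  assumes "h > 0"
  shows "\<exists>N::nat. \<forall>(V::'a set) (E::'a \<Rightarrow> 'a \<Rightarrow> bool).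
           simple_graph V E \<and> card V \<ge> N \<and> \<not> complete_graph V E \<and> \<not> edgeless_graph V E \<longrightarrow>
           (\<exists>S\<subseteq>V. card S = h \<and>
              (is_star S E \<or> has_exactly_one_edge S E \<or>
               is_star S (compl_rel E) \<or> has_exactly_one_edge S (compl_rel E)))"
proof (cases "h = 1")
  case True
  show ?thesis
  proof (intro exI[of _ 0] allI impI)
    fix V :: "'a set" and E
    assume a: "simple_graph V E \<and> 0 \<le> card V \<and> \<not> complete_graph V E \<and> \<not> edgeless_graph V E"
    then obtain x where "x \<in> V" unfolding edgeless_graph_def by blast
    moreover have "is_star {x} E" unfolding is_star_def by auto
    ultimately show "\<exists>S\<subseteq>V. card S = h \<and> (is_star S E \<or> has_exactly_one_edge S E \<or>
               is_star S (compl_rel E) \<or> has_exactly_one_edge S (compl_rel E))"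
      using True by (intro exI[of _ "{x}"]) auto
  qed
next
  case False
  then have h: "h \<ge> 2" using assms by linarith
  obtain r where r: "\<forall>(V::'a set) (E::'a set set). finite V \<and> card V \<ge> r \<longrightarrow>
    (\<exists>R \<subseteq> V. card R = 2*h \<and> clique R E \<or> card R = 2*h \<and> indep R E)"
    using ramsey2 by blast
  show ?thesis
  proof (intro exI[of _ r] allI impI)
    fix V :: "'a set" and E
    assume a: "simple_graph V E \<and> r \<le> card V \<and> \<not> complete_graph V E \<and> \<not> edgeless_graph V E"
    have fin: "finite V" and sym: "\<forall>x\<in>V. \<forall>y\<in>V. E x y \<longrightarrow> E y x"
      using a unfolding simple_graph_def by auto
    have symc: "\<forall>x\<in>V. \<forall>y\<in>V. compl_rel E x y \<longrightarrow> compl_rel E y x"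
      using sym unfolding compl_rel_def by auto
    have edE: "\<exists>x\<in>V. \<exists>y\<in>V. x \<noteq> y \<and> E x y"
      using a unfolding edgeless_graph_def simple_graph_def by metis
    have edC: "\<exists>x\<in>V. \<exists>y\<in>V. x \<noteq> y \<and> compl_rel E x y"
      using a unfolding complete_graph_def compl_rel_def by metis
    define E' where "E' = {{x,y} | x y. E x y}"
    obtain R where R: "R \<subseteq> V" "card R = 2*h \<and> clique R E' \<or> card R = 2*h \<and> indep R E'"
      using r fin a by blast
    show "\<exists>S\<subseteq>V. card S = h \<and> (is_star S E \<or> has_exactly_one_edge S E \<or>
               is_star S (compl_rel E) \<or> has_exactly_one_edge S (compl_rel E))"
    proof (cases "card R = 2*h \<and> clique R E'")
      case True
      have ind: "\<forall>a\<in>R. \<forall>b\<in>R. a \<noteq> b \<longrightarrow> \<not> compl_rel E a b"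
      proof (intro ballI impI)
        fix a b assume ab: "a \<in> R" "b \<in> R" "a \<noteq> b"
        then have "{a,b} \<in> E'" using True unfolding clique_def by blast
        then obtain x y where "{a,b} = {x,y}" "E x y" unfolding E'_def by blast
        then have "(a = x \<and> b = y) \<or> (a = y \<and> b = x)" "E x y" by (simp_all add: doubleton_eq_iff)
        then have "E a b" using sym ab R by blast
        then show "\<not> compl_rel E a b" unfolding compl_rel_def by simp
      qed
      show ?thesis using core[OF fin symc R(1) ind _ h edC] True by auto
    next
      case False
      then have F: "card R = 2*h" "indep R E'" using R by auto
      have ind: "\<forall>a\<in>R. \<forall>b\<in>R. a \<noteq> b \<longrightarrow> \<not> E a b"
      proof (intro ballI impI)
        fix a b assume ab: "a \<in> R" "b \<in> R" "a \<noteq> b"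
        then have "{a,b} \<notin> E'" using F unfolding indep_def by blast
        then show "\<not> E a b" unfolding E'_def by blast
      qed
      show ?thesis using core[OF fin sym R(1) ind _ h edE] F by auto
    qed
  qed
qed

end
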